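(* Let $\mathcal{A}$ be a separating union-closed family with base set $[n]$ and height $h$, and suppose $h = 4 \leq n$ and $0 \leq |\mathcal{B}(\mathcal{A})| \leq 2$. Then \[\mathrm{Avg}(\mathcal{A})=\frac{\sum_{A \in \mathcal{A}}|A|}{|\mathcal{A}|} \geq \frac{n}{2}.\]
   Context: A family of sets $\mathcal{A}$ is union-closed if it is a finite family of distinct finite sets with at least one nonempty member set, and $X,Y\in\mathcal{A}$ implies $X\cup Y\in\mathcal{A}$ (the empty set may be a member). For a family $\mathcal{F}$, $b(\mathcal{F})=\bigcup_{F\in\mathcal{F}}F$; the base set $b(\mathcal{A})$ is denoted $[n]=\{1,\dots,n\}$. $\mathcal{A}$ is separating if for any two distinct $x,y\in[n]$ there is $A\in\mathcal{A}$ containing exactly one of $x,y$. A chain in $\mathcal{A}$ is a subfamily any two distinct members of which are comparable under proper inclusion; the height $h$ of $\mathcal{A}$ is the maximum size of a chain in $\mathcal{A}$. For real $x\ge 0$, $\mathcal{A}_{<x}=\{A\in\mathcal{A} : |A|<x\}$. For $\mathcal{S}\subseteq\mathcal{A}$ and $S\in\mathcal{S}$, $\mathrm{irr}_{\mathcal{S}}(S)=\{s\in S : s\notin b(\mathcal{S}\setminus\{S\})\}$, and $\mathcal{S}$ is irredundant if $\mathrm{irr}_{\mathcal{S}}(S)\neq\emptyset$ for every $S\in\mathcal{S}$. Set $B=b(\mathcal{A}_{<n/2})$, and let $\mathcal{B}=\mathcal{B}(\mathcal{A})$ denote any irredundant subfamily of $\mathcal{A}_{<n/2}$ of minimum size such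 that $b(\mathcal{B})=B$ (so $|\mathcal{B}|$ is well defined). $\mathrm{Avg}(\mathcal{A})$ denotes the average size of a member set of $\mathcal{A}$. *)

theory Defs
  imports Complex_Main
begin

definition union_closed :: "'a set set \<Rightarrow> bool" where
  "union_closed \<A> \<longleftrightarrow> finite \<A> \<and> (\<forall>A\<in>\<A>. finite A) \<and> (\<exists>A\<in>\<A>. A \<noteq> {})
     \<and> (\<forall>X\<in>\<A>. \<forall>Y\<in>\<A>. X \<union> Y \<in> \<A>)"

definition separating :: "'a set set \<Rightarrow> bool" where
  "separating \<A> \<longleftrightarrow> (\<forall>x\<in>\<Union>\<A>. \<forall>y\<in>\<Union>\<A>. x \<noteq> y \<longrightarrow>
     (\<exists>A\<in>\<A>. (x \<in> A \<and> y \<notin> A) \<or> (y \<in> A \<and> x \<notin> A)))"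

definition is_chain :: "'a set set \<Rightarrow> bool" where
  "is_chain \<C> \<longleftrightarrow> (\<forall>X\<in>\<C>. \<forall>Y\<in>\<C>. X \<noteq> Y \<longrightarrow> X \<subset> Y \<or> Y \<subset> X)"

definition height :: "'a set set \<Rightarrow> nat" where
  "height \<A> = Max {card \<C> | \<C>. \<C> \<subseteq> \<A> \<and> is_chain \<C>}"

definition below :: "'a set set \<Rightarrow> real \<Rightarrow> 'a set set" where
  "below \<A> x = {A \<in> \<A>. real (card A) < x}"

definition irr :: "'a set set \<Rightarrow> 'a set \<Rightarrow> 'a set" where
  "irr \<S> S = {s \<in> S. s \<notin> \<Union>(\<S> - {S})}"

definition irredundant :: "'a set set \<Rightarrow> bool" where
  "irredundant \<S> \<longleftrightarrow> (\<forall>S\<in>\<S>. irr \<S> S \<noteq> {})"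

definition B_size :: "'a set set \<Rightarrow> nat" where
  "B_size \<A> = (let n = card (\<Union>\<A>); L = below \<A> (real n / 2) in
     Min {card \<S> | \<S>. \<S> \<subseteq> L \<and> irredundant \<S> \<and> \<Union>\<S> = \<Union>L})"

definition Avg :: "'a set set \<Rightarrow> real" where
  "Avg \<A> = (\<Sum>A\<in>\<A>. real (card A)) / real (card \<A>)"

end

theory Submission
  imports Defs
begin
lemma uc_Union:
  assumes "union_closed F" "G \<subseteq> F" "G \<noteq> {}"
  shows "\<Union>G \<in> F"
proof -
  have fin: "finite G" using assms(1,2) finite_subset unfolding union_closed_def by blast
  show ?thesis using fin assms(3,2)
  proof (induction G rule: finite_ne_induct)
    case (singleton x) then show ?case by auto
  next
    case (insert x G)
    then have "\<Union>G \<in> F" by auto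
    moreover have "x \<in> F" using insert by auto
    ultimately show ?case using assms(1) unfolding union_closed_def by auto
  qed
qed

lemma DC:
  fixes Z :: "'a set" and X :: "'a set set"
  assumes "finite Z" "finite X" "\<And>A. A \<in> X \<Longrightarrow> A \<subseteq> Z"
    "\<And>A C. A \<in> X \<Longrightarrow> C \<in> X \<Longrightarrow> A \<noteq> C \<Longrightarrow> A \<union> C = Z"
  shows "(\<Sum>A\<in>X. card (Z - A)) \<le> card Z"
proof -
  have "card (\<Union>A\<in>X. Z - A) = (\<Sum>A\<in>X. card (Z - A))"
    by (rule card_UN_disjoint) (use assms in auto)
  moreover have "card (\<Union>A\<in>X. Z - A) \<le> card Z"
    by (rule card_mono) (use assms in auto)
  ultimately show ?thesis by simp
qed

locale UCF =
  fixes F :: "nat set set" and n :: nat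
  assumes uc: "union_closed F" and sep: "separating F" and top: "\<Union>F = {1..n}"
    and ht: "height F = 4" and n4: "4 \<le> n"
begin

lemma finF: "finite F" using uc unfolding union_closed_def by auto

lemma sub_top: "X \<in> F \<Longrightarrow> X \<subseteq> {1..n}" using top by auto

lemma finX: "X \<in> F \<Longrightarrow> finite X" using sub_top finite_subset by blast

lemma un: "X \<in> F \<Longrightarrow> Y \<in> F \<Longrightarrow> X \<union> Y \<in> F" using uc unfolding union_closed_def by auto

lemma top_in: "{1..n} \<in> F"
proof -
  have "F \<noteq> {}" using uc unfolding union_closed_def by auto
  then show ?thesis using uc_Union[OF uc, of F] top by auto
qed

lemma chain_le: assumes "C \<subseteq> F" "is_chain C" shows "card C \<le> 4"
proof -
  have "{card C | C. C \<subseteq> F \<and> is_chain C} \<subseteq> card ` Pow F" by auto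
  then have "finite {card C | C. C \<subseteq> F \<and> is_chain C}" using finF finite_subset by blast
  then have "card C \<le> height F" unfolding height_def using assms by (intro Max_ge) auto
  then show ?thesis using ht by simp
qed

lemma chain5:
  assumes "a \<in> F" "b \<in> F" "c \<in> F" "d \<in> F" "e \<in> F"
    "a \<subset> b" "b \<subset> c" "c \<subset> d" "d \<subset> e"
  shows False
proof -
  have ch: "is_chain {a,b,c,d,e}" unfolding is_chain_def using assms(6-9) by blast
  have d: "a \<noteq> b" "a \<noteq> c" "a \<noteq> d" "a \<noteq> e" "b \<noteq> c" "b \<noteq> d" "b \<noteq> e"
    "c \<noteq> d" "c \<noteq> e" "d \<noteq> e" using assms(6-9) by blast+
  have "card {a,b,c,d,e} = 5" using d by simp
  then show False using chain_le[OF _ ch] assms(1-5) by auto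
qed

lemma V1:
  assumes "X \<in> F" "X' \<in> F" "Z \<in> F" "C1 \<in> F" "C2 \<in> F" "X \<noteq> X'"
    "X \<subset> Z" "X' \<subset> Z" "Z \<subset> C1" "C1 \<subset> C2"
  shows "X \<union> X' = Z"
proof (rule ccontr)
  assume ne: "X \<union> X' \<noteq> Z"
  have XX: "X \<union> X' \<in> F" using un assms by auto
  show False
  proof (cases "X' \<subseteq> X")
    case True
    then show False using chain5[of X' X Z C1 C2] assms by auto
  next
    case False
    then have "X \<subset> X \<union> X'" by auto
    moreover have "X \<union> X' \<subset> Z" using ne assms by auto
    ultimately show False using chain5[of X "X \<union> X'" Z C1 C2] assms XX by auto
  qed
qed

lemma V2:
  assumes "W \<in> F" "X \<in> F" "X' \<in> F" "Z \<in> F" "C1 \<in> F" "X \<noteq> X'"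
    "W \<subset> X" "W \<subset> X'" "X \<subset> Z" "X' \<subset> Z" "Z \<subset> C1"
  shows "X \<union> X' = Z"
proof (rule ccontr)
  assume ne: "X \<union> X' \<noteq> Z"
  have XX: "X \<union> X' \<in> F" using un assms by auto
  show False
  proof (cases "X' \<subseteq> X")
    case True
    then show False using chain5[of W X' X Z C1] assms by auto
  next
    case False
    then have "X \<subset> X \<union> X'" by auto
    moreover have "X \<union> X' \<subset> Z" using ne assms by auto
    ultimately show False using chain5[of W X "X \<union> X'" Z C1] assms XX by auto
  qed
qed

definition fv :: "nat set \<Rightarrow> int" where "fv X = 2 * int (card X) - int n"

lemma coatom_or_below:
  assumes "A1 \<in> F" "A1 \<subset> B" "B \<in> F" "x \<in> {1..n}" "x \<notin> B" "{1..n} - {x} \<notin> F"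
    "D \<in> F" "x \<notin> D"
  shows "D \<subseteq> B"
proof -
  define G where "G = {D\<in>F. x \<notin> D}"
  define M where "M = \<Union>G"
  have MF: "M \<in> F" unfolding M_def using uc_Union[OF uc, of G] assms(3,5) unfolding G_def by auto
  have xM: "x \<notin> M" unfolding M_def G_def by auto
  have BM: "B \<subseteq> M" unfolding M_def G_def using assms(3,5) by auto
  have DM: "D \<subseteq> M" unfolding M_def G_def using assms(7,8) by auto
  show ?thesis
  proof (rule ccontr)
    assume "\<not> D \<subseteq> B"
    then have BM': "B \<subset> M" using BM DM by auto
    have "M \<subseteq> {1..n} - {x}" using sub_top[OF MF] xM by auto
    moreover have "M \<noteq> {1..n} - {x}" using MF assms(6) by auto
    ultimately obtain y where "y \<in> ({1..n} - {x}) - M" by blast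
    then have y: "y \<in> {1..n}" "y \<noteq> x" "y \<notin> M" by auto
    obtain E where E: "E \<in> F" "(x \<in> E \<and> y \<notin> E) \<or> (y \<in> E \<and> x \<notin> E)"
      using sep y assms(4) top unfolding separating_def by metis
    show False
    proof (cases "x \<in> E")
      case True
      then have yE: "y \<notin> E" using E by auto
      have "M \<union> E \<in> F" using un MF E by auto
      moreover have "M \<subset> M \<union> E" using True xM by auto
      moreover have "M \<union> E \<subset> {1..n}" using sub_top MF E(1) yE y by auto
      ultimately show False using chain5[of A1 B M "M \<union> E" "{1..n}"] assms(1,2,3) MF BM' top_in by auto
    next
      case False
      then have "E \<in> G" unfolding G_def using E by auto
      then have "E \<subseteq> M" unfolding M_def by auto
      then show False using E False y by auto
    qed
  qed
qed

lemma caseN: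
  assumes BF: "B \<in> F" and CF: "C \<in> F" "B \<subset> C" "C \<subset> {1..n}"
    and smallB: "\<And>X. X \<in> F \<Longrightarrow> 2 * card X < n \<Longrightarrow> X \<subseteq> B"
  shows "0 \<le> (\<Sum>X\<in>F. fv X)"
proof -
  define N where "N = {1..n}"
  have NF: "N \<in> F" unfolding N_def using top_in .
  have cardN: "card N = n" unfolding N_def by simp
  have finB: "finite B" using finX BF by auto
  define \<beta> where "\<beta> = card B"
  have BN: "B \<subset> N" using CF unfolding N_def by auto
  have betan: "\<beta> < n" unfolding \<beta>_def using psubset_card_mono[OF _ BN] cardN unfolding N_def by auto
  define Sm where "Sm = {X\<in>F. 2 * card X < n \<and> X \<noteq> B}"
  have finSm: "finite Sm" unfolding Sm_def using finF by auto
  have SmB: "X \<subset> B" if "X \<in> Sm" for X using that smallB unfolding Sm_def by auto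
  have pw: "X \<union> Y = B" if "X \<in> Sm" "Y \<in> Sm" "X \<noteq> Y" for X Y
    using V1[of X Y B C N] that SmB CF BF NF unfolding Sm_def N_def by auto
  define D where "D = (\<Sum>X\<in>Sm. card (B - X))"
  have DB: "D \<le> \<beta>" unfolding D_def \<beta>_def
    by (rule DC) (use finB finSm pw SmB in auto)
  have kD: "card Sm \<le> D"
  proof -
    have "card Sm = (\<Sum>X\<in>Sm. 1)" by simp
    also have "\<dots> \<le> D" unfolding D_def
    proof (rule sum_mono)
      fix X assume "X \<in> Sm"
      then have "B - X \<noteq> {}" using SmB by auto
      then show "1 \<le> card (B - X)" using finB by (simp add: Suc_le_eq card_gt_0_iff)
    qed
    finally show ?thesis .
  qed
  have fvSm: "(\<Sum>X\<in>Sm. fv X) = int (card Sm) * (2 * int \<beta> - int n) - 2 * int D"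
  proof -
    have "(\<Sum>X\<in>Sm. fv X) = (\<Sum>X\<in>Sm. (2 * int \<beta> - int n) - 2 * int (card (B - X)))"
    proof (rule sum.cong)
      fix X assume "X \<in> Sm"
      then have "X \<subseteq> B" using SmB by auto
      then have "card (B - X) = card B - card X" using finB by (simp add: card_Diff_subset finite_subset)
      moreover have "card X \<le> card B" using \<open>X \<subseteq> B\<close> finB card_mono by auto
      ultimately show "fv X = (2 * int \<beta> - int n) - 2 * int (card (B - X))"
        unfolding fv_def \<beta>_def by simp
    qed simp
    also have "\<dots> = int (card Sm) * (2 * int \<beta> - int n) - 2 * int D"
      unfolding D_def by (simp add: sum_subtractf sum_distrib_left of_nat_sum)
    finally show ?thesis .
  qed
  have rest: "0 \<le> fv X" if "X \<in> F" "X \<notin> insert N (insert B Sm)" for X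
    using that unfolding Sm_def fv_def by auto
  have fvN: "fv N = int n" unfolding fv_def cardN by simp
  have fvB: "fv B = 2 * int \<beta> - int n" unfolding fv_def \<beta>_def by simp
  have NnB: "N \<noteq> B" using BN by auto
  have NnSm: "N \<notin> Sm" using SmB BN by auto
  have BnSm: "B \<notin> Sm" unfolding Sm_def by auto
  show ?thesis
  proof (cases "n \<le> 2 * \<beta>")
    case True
    have "(\<Sum>X\<in>insert N (insert B Sm). fv X) \<le> (\<Sum>X\<in>F. fv X)"
      by (rule sum_mono2) (use finF NF BF rest in \<open>auto simp: Sm_def\<close>)
    moreover have "(\<Sum>X\<in>insert N (insert B Sm). fv X) = fv N + fv B + (\<Sum>X\<in>Sm. fv X)"
      using finSm NnB NnSm BnSm by simp
    moreover have "0 \<le> int (card Sm) * (2 * int \<beta> - int n)" using True by simp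
    ultimately show ?thesis using fvSm fvN fvB DB by linarith
  next
    case False
    show ?thesis
    proof (cases "Sm = {}")
      case True
      have "(\<Sum>X\<in>insert N (insert B Sm). fv X) \<le> (\<Sum>X\<in>F. fv X)"
        by (rule sum_mono2) (use finF NF BF rest in \<open>auto simp: Sm_def\<close>)
      then show ?thesis using True fvN fvB NnB by simp
    next
      case SmNE: False
      then obtain A1 where A1: "A1 \<in> Sm" by auto
      have A1F: "A1 \<in> F" using A1 unfolding Sm_def by auto
      define Ex where "Ex = {x\<in>N - B. N - {x} \<notin> F}"
      have below: "D' \<subseteq> B" if "x \<in> Ex" "D' \<in> F" "x \<notin> D'" for x D'
        using coatom_or_below[of A1 B x D'] that A1F SmB[OF A1] BF unfolding Ex_def N_def by auto
      have Ex1: "card Ex \<le> 1"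
      proof -
        have "finite Ex" unfolding Ex_def N_def by auto
        moreover have "\<forall>a\<in>Ex. \<forall>b\<in>Ex. a = b"
        proof (intro ballI, rule ccontr)
          fix a b assume ab: "a \<in> Ex" "b \<in> Ex" "a \<noteq> b"
          then have "a \<in> \<Union>F" "b \<in> \<Union>F" using top unfolding Ex_def N_def by auto
          then obtain E where E: "E \<in> F" "(a \<in> E \<and> b \<notin> E) \<or> (b \<in> E \<and> a \<notin> E)"
            using sep ab(3) unfolding separating_def by metis
          from E(2) show False
          proof
            assume "a \<in> E \<and> b \<notin> E"
            then have "E \<subseteq> B" using below ab E by auto
            then show False using ab \<open>a \<in> E \<and> b \<notin> E\<close> unfolding Ex_def by auto
          next
            assume "b \<in> E \<and> a \<notin> E"
            then have "E \<subseteq> B" using below ab E by auto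
            then show False using ab \<open>b \<in> E \<and> a \<notin> E\<close> unfolding Ex_def by auto
          qed
        qed
        ultimately show ?thesis using card_le_Suc0_iff_eq by auto
      qed
      define Good where "Good = N - B - Ex"
      define Co where "Co = (\<lambda>x. N - {x}) ` Good"
      have injG: "inj_on (\<lambda>x. N - {x}) Good" unfolding inj_on_def Good_def by auto
      have cardCo: "card Co = card Good" unfolding Co_def using card_image[OF injG] .
      have finN: "finite N" unfolding N_def by auto
      have cNB: "card (N - B) = n - \<beta>" using card_Diff_subset[of B N] finB BN cardN unfolding \<beta>_def by auto
      have "card (N - B) \<le> card Good + card Ex"
      proof -
        have "N - B \<subseteq> Good \<union> Ex" unfolding Good_def by auto
        then have "card (N - B) \<le> card (Good \<union> Ex)" using finN card_mono[of "Good \<union> Ex"]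
          unfolding Good_def Ex_def by auto
        also have "\<dots> \<le> card Good + card Ex" by (rule card_Un_le)
        finally show ?thesis .
      qed
      then have cG: "n - \<beta> - 1 \<le> card Co" using cNB Ex1 cardCo by linarith
      have CoF: "Co \<subseteq> F" unfolding Co_def Good_def Ex_def by auto
      have cardCoX: "card X = n - 1" if "X \<in> Co" for X
      proof -
        have "X \<in> (\<lambda>x. N - {x}) ` Good" using that unfolding Co_def .
        then obtain x where "x \<in> Good" "X = N - {x}" by blast
        then show ?thesis using finN cardN unfolding Good_def by auto
      qed
      have finCo: "finite Co" unfolding Co_def Good_def using finN by auto
      have SmCo: "Sm \<inter> Co = {}"
      proof -
        { fix X assume X: "X \<in> Sm" "X \<in> Co"
          then have "card X = n - 1" "2 * card X < n" using cardCoX unfolding Sm_def by auto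
          then have False using n4 by linarith }
        then show ?thesis by blast
      qed
      have NCo: "N \<notin> Co"
      proof
        assume "N \<in> Co" then have "card N = n - 1" using cardCoX by blast
        then show False using cardN n4 by linarith
      qed
      have BCo: "B \<notin> Co"
      proof
        assume "B \<in> Co" then have "\<beta> = n - 1" using cardCoX unfolding \<beta>_def by blast
        then show False using False n4 by linarith
      qed
      have rest2: "0 \<le> fv X" if "X \<in> F" "X \<notin> insert N (insert B (Sm \<union> Co))" for X
        using that unfolding Sm_def fv_def by auto
      have "(\<Sum>X\<in>insert N (insert B (Sm \<union> Co)). fv X) \<le> (\<Sum>X\<in>F. fv X)"
        by (rule sum_mono2) (use finF NF BF CoF rest2 in \<open>auto simp: Sm_def\<close>)
      moreover have "(\<Sum>X\<in>insert N (insert B (Sm \<union> Co)). fv X) = fv N + fv B + (\<Sum>X\<in>Sm. fv X) + (\<Sum>X\<in>Co. fv X)"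
        using finSm finCo NnB NnSm BnSm NCo BCo SmCo by (simp add: sum.union_disjoint)
      moreover have "(\<Sum>X\<in>Co. fv X) = int (card Co) * (int n - 2)"
      proof -
        have "(\<Sum>X\<in>Co. fv X) = (\<Sum>X\<in>Co. int n - 2)"
          by (rule sum.cong) (use cardCoX n4 in \<open>auto simp: fv_def\<close>)
        then show ?thesis by simp
      qed
      moreover have kb: "card Sm \<le> \<beta>" using kD DB by auto
      moreover have b1: "1 \<le> \<beta>"
      proof -
        have "A1 \<subset> B" using SmB A1 by auto
        then have "B \<noteq> {}" by auto
        then show ?thesis unfolding \<beta>_def using finB by (simp add: Suc_le_eq card_gt_0_iff)
      qed
      moreover have "int (card Sm) * (2 * int \<beta> - int n) \<ge> int \<beta> * (2 * int \<beta> - int n)"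
        using kb False by (intro mult_right_mono_neg) auto
      moreover have "int (card Co) * (int n - 2) \<ge> (int n - int \<beta> - 1) * (int n - 2)"
        using cG n4 betan by (intro mult_right_mono) auto
      moreover have "int \<beta> * (2 * int \<beta> - int n) + (int n - int \<beta> - 1) * (int n - 2) \<ge> 0"
      proof -
        define r where "r = int n - 2 * int \<beta>"
        have r1: "r \<ge> 1" using False unfolding r_def by auto
        have "int \<beta> * (2 * int \<beta> - int n) + (int n - int \<beta> - 1) * (int n - 2)
              = 2 * (int \<beta> - 1)^2 + r * (2 * int \<beta> + r - 3)"
          unfolding r_def by (simp add: algebra_simps power2_eq_square)
        moreover have "2 * int \<beta> + r - 3 \<ge> 0" using n4 unfolding r_def by auto
        ultimately show ?thesis using r1 by (simp add: zero_le_mult_iff)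
      qed
      ultimately show ?thesis using fvSm fvN fvB DB by linarith
    qed
  qed
qed

end

locale UC3 = UCF +
  fixes z :: nat and B S1 S2 :: "nat set" and m :: nat
  assumes zN: "z \<in> {1..n}" and Bdef: "B = {1..n} - {z}" and BF: "B \<in> F"
    and S1F: "S1 \<in> F" and S2F: "S2 \<in> F" and S12: "S1 \<inter> S2 = {}" and SB: "S1 \<union> S2 = B"
    and c1: "card S1 = m" and c2: "card S2 = m" and nm: "n = 2 * m + 1"
    and smallB: "\<And>X. X \<in> F \<Longrightarrow> 2 * card X < n \<Longrightarrow> X \<subseteq> B"
begin

lemma m2: "2 \<le> m" using n4 nm by linarith

lemma finS1: "finite S1" using finX S1F by auto
lemma finS2: "finite S2" using finX S2F by auto
lemma finB: "finite B" using finX BF by auto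

lemma S1ne: "S1 \<noteq> {}" proof assume "S1 = {}" then show False using c1 m2 by simp qed
lemma S2ne: "S2 \<noteq> {}" proof assume "S2 = {}" then show False using c2 m2 by simp qed

lemma cardN: "card {1..n} = n" by simp

lemma BN: "B \<subset> {1..n}" using zN unfolding Bdef by blast

lemma cardB: "card B = 2 * m"
  using SB card_Un_disjoint[OF finS1 finS2 S12] c1 c2 by auto

lemma S1B: "S1 \<subset> B" using SB S12 S2ne by blast
lemma S2B: "S2 \<subset> B" using SB S12 S1ne by blast

lemma small_iff: "2 * card X < n \<longleftrightarrow> card X \<le> m" using nm by auto

lemma fv_eq: "fv X = 2 * int (card X) - 2 * int m - 1" unfolding fv_def using nm by simp

lemma cardX_split: assumes "X \<subseteq> B" shows "card X = card (X \<inter> S1) + card (X \<inter> S2)"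
proof -
  have "X = (X \<inter> S1) \<union> (X \<inter> S2)" using assms SB by auto
  moreover have "finite (X \<inter> S1)" "finite (X \<inter> S2)" using finS1 finS2 by auto
  ultimately show ?thesis using card_Un_disjoint[of "X \<inter> S1" "X \<inter> S2"] S12 by auto
qed

lemma meets_both_big:
  assumes "X \<subseteq> B" "S2 \<subseteq> X" "X \<inter> S1 \<noteq> {}"
  shows "m < card X"
proof -
  have "X \<inter> S1 \<noteq> {}" using assms by auto
  then have "0 < card (X \<inter> S1)" using finS1 by (simp add: card_gt_0_iff)
  moreover have "X \<inter> S2 = S2" using assms by auto
  ultimately show ?thesis using cardX_split[OF assms(1)] c2 by auto
qed

lemma meets_both_big':
  assumes "X \<subseteq> B" "S1 \<subseteq> X" "X \<inter> S2 \<noteq> {}"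
  shows "m < card X"
proof -
  have "0 < card (X \<inter> S2)" using assms finS2 by (simp add: card_gt_0_iff)
  moreover have "X \<inter> S1 = S1" using assms by auto
  ultimately show ?thesis using cardX_split[OF assms(1)] c1 by auto
qed

lemma base4:
  assumes "finite K" "K \<subseteq> F" "{1..n} \<notin> K" "B \<notin> K" "S1 \<notin> K" "S2 \<notin> K"
    and rest: "\<And>X. X \<in> F \<Longrightarrow> X \<notin> K \<Longrightarrow> X \<notin> {{1..n}, B, S1, S2} \<Longrightarrow> 0 \<le> fv X"
  shows "4 * int m - 2 + (\<Sum>X\<in>K. fv X) \<le> (\<Sum>X\<in>F. fv X)"
proof -
  let ?K = "insert {1..n} (insert B (insert S1 (insert S2 K)))"
  have e1: "(\<Sum>X\<in>?K. fv X) \<le> (\<Sum>X\<in>F. fv X)"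
  proof (rule sum_mono2)
    show "finite F" using finF .
    show "?K \<subseteq> F" using assms(2) top_in BF S1F S2F by auto
    fix b assume "b \<in> F - ?K"
    then show "0 \<le> fv b" using rest by blast
  qed
  have e2: "(\<Sum>X\<in>?K. fv X) = fv {1..n} + fv B + fv S1 + fv S2 + (\<Sum>X\<in>K. fv X)"
  proof -
    have d: "{1..n} \<noteq> B" "{1..n} \<noteq> S1" "{1..n} \<noteq> S2" "B \<noteq> S1" "B \<noteq> S2" "S1 \<noteq> S2"
      using BN S1B S2B S12 S1ne by auto
    show ?thesis using assms(1,3-6) d by (simp add: algebra_simps)
  qed
  have e3: "fv {1..n} + fv B + fv S1 + fv S2 = 4 * int m - 2"
    unfolding fv_eq cardB c1 c2 using nm by simp
  show ?thesis using e1 unfolding e2 e3 .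
qed

end

context UC3
begin

lemma X_sub_B: "X \<in> F \<Longrightarrow> card X \<le> m \<Longrightarrow> X \<subset> B"
proof -
  assume "X \<in> F" "card X \<le> m"
  then have "X \<subseteq> B" using smallB small_iff by blast
  moreover have "X \<noteq> B" using \<open>card X \<le> m\<close> cardB m2 by auto
  ultimately show "X \<subset> B" by blast
qed

lemma fvN: "fv {1..n} = 2 * int m + 1" unfolding fv_eq using nm by simp

lemma case3a:
  assumes e: "{} \<in> F"
  shows "0 \<le> (\<Sum>X\<in>F. fv X)"
proof -
  have cls: "X = {} \<or> X = S1 \<or> X = S2" if "X \<in> F" "card X \<le> m" for X
  proof (rule ccontr)
    assume h: "\<not> (X = {} \<or> X = S1 \<or> X = S2)"
    have XB: "X \<subset> B" using X_sub_B that by blast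
    have "X \<union> S1 = B"
      by (rule V2[of "{}" X S1 B "{1..n}"]) (use e that S1F BF top_in h S1B XB BN S1ne in blast)+
    then have "S2 \<subseteq> X" using SB S12 by blast
    then have "X = S2" using card_subset_eq[OF finS2] that c2 XB finite_subset[OF _ finB]
      by (metis card_seteq order_less_imp_le)
    then show False using h by blast
  qed
  have "4 * int m - 2 + (\<Sum>X\<in>{{}}. fv X) \<le> (\<Sum>X\<in>F. fv X)"
  proof (rule base4)
    show "finite {{}}" by simp
    show "{{}} \<subseteq> F" using e by simp
    show "{1..n} \<notin> {{}}" using n4 by simp
    show "B \<notin> {{}}" using S1B by blast
    show "S1 \<notin> {{}}" using S1ne by blast
    show "S2 \<notin> {{}}" using S2ne by blast
    fix X assume X: "X \<in> F" "X \<notin> {{}}" "X \<notin> {{1..n}, B, S1, S2}"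
    then have "\<not> card X \<le> m" using cls by blast
    then show "0 \<le> fv X" unfolding fv_eq by simp
  qed
  moreover have "fv {} = - 2 * int m - 1" unfolding fv_eq by simp
  ultimately show ?thesis using m2 by simp
qed

end

context UC3
begin

lemma case3b:
  assumes e: "{} \<notin> F" and X0: "X0 \<in> F" "X0 \<subset> S1"
  shows "0 \<le> (\<Sum>X\<in>F. fv X)"
proof -
  define N where "N = {1..n}"
  have NF: "N \<in> F" unfolding N_def by (rule top_in)
  have BN': "B \<subset> N" unfolding N_def by (rule BN)
  define XX where "XX = {X\<in>F. X \<subset> S1}"
  have finXX: "finite XX" unfolding XX_def using finF by simp
  have XXne: "X \<noteq> {}" if "X \<in> XX" for X using that e unfolding XX_def by blast
  have X0ne: "X0 \<noteq> {}" using X0 e by blast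
  have X0S2F: "X0 \<union> S2 \<in> F" using un X0 S2F by blast
  have X0S2a: "S2 \<subset> X0 \<union> S2" using X0 X0ne S12 by blast
  have X0S2b: "X0 \<union> S2 \<subset> B"
  proof -
    have "X0 \<union> S2 \<subseteq> B" using X0 SB by blast
    moreover have "X0 \<union> S2 \<noteq> B"
    proof
      assume "X0 \<union> S2 = B"
      then have "S1 \<subseteq> X0" using SB S12 by blast
      then show False using X0 by blast
    qed
    ultimately show ?thesis by blast
  qed
  have cls: "X = S1 \<or> X = S2 \<or> X \<in> XX" if XF: "X \<in> F" and Xc: "card X \<le> m" for X
  proof -
    have XB: "X \<subset> B" using X_sub_B XF Xc by blast
    have Xne: "X \<noteq> {}" using e XF by blast
    show ?thesis
    proof (cases "X \<inter> S2 = {}")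
      case True
      then have "X \<subseteq> S1" using XB SB by blast
      then show ?thesis unfolding XX_def using XF by blast
    next
      case F2: False
      show ?thesis
      proof (cases "X \<inter> S1 = {}")
        case True
        then have XS2: "X \<subseteq> S2" using XB SB by blast
        show ?thesis
        proof (cases "X = S2")
          case True then show ?thesis by blast
        next
          case False
          then have "X \<subset> S2" using XS2 by blast
          then have False using chain5[OF XF S2F X0S2F BF NF _ X0S2a X0S2b BN'] by blast
          then show ?thesis ..
        qed
      next
        case F1: False
        have U: "S1 \<union> X \<in> F" using un S1F XF by blast
        have a: "S1 \<subset> S1 \<union> X" using F2 S12 by blast
        have b: "S1 \<union> X \<subset> B"
        proof -
          have "S1 \<union> X \<subseteq> B" using XB SB by blast
          moreover have "S1 \<union> X \<noteq> B"
          proof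
            assume "S1 \<union> X = B"
            then have "S2 \<subseteq> X" using SB S12 by blast
            then have "m < card X" using meets_both_big[of X] XB F1 by blast
            then show False using Xc by simp
          qed
          ultimately show ?thesis by blast
        qed
        have False using chain5[OF X0(1) S1F U BF NF X0(2) a b BN'] .
        then show ?thesis ..
      qed
    qed
  qed
  have pw: "X \<union> Y = S1" if "X \<in> XX" "Y \<in> XX" "X \<noteq> Y" for X Y
  proof -
    have "X \<in> F" "Y \<in> F" "X \<subset> S1" "Y \<subset> S1" using that unfolding XX_def by blast+
    then show ?thesis using V1[OF _ _ S1F BF NF that(3) _ _ S1B BN'] by blast
  qed
  define E where "E = (\<Sum>X\<in>XX. card (S1 - X))"
  have EB: "E \<le> m"
  proof -
    have "E \<le> card S1" unfolding E_def
    proof (rule DC[OF finS1 finXX])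
      show "\<And>A. A \<in> XX \<Longrightarrow> A \<subseteq> S1" unfolding XX_def by blast
      show "\<And>A C. A \<in> XX \<Longrightarrow> C \<in> XX \<Longrightarrow> A \<noteq> C \<Longrightarrow> A \<union> C = S1" by (rule pw)
    qed
    then show ?thesis using c1 by simp
  qed
  define img where "img = (\<lambda>X. X \<union> S2) ` XX"
  have inj: "inj_on (\<lambda>X. X \<union> S2) XX"
  proof (rule inj_onI)
    fix X Y assume "X \<in> XX" "Y \<in> XX" "X \<union> S2 = Y \<union> S2"
    moreover have "X \<inter> S2 = {}" "Y \<inter> S2 = {}" using calculation(1,2) S12 unfolding XX_def by blast+
    ultimately show "X = Y" by blast
  qed
  have disj: "XX \<inter> img = {}"
  proof -
    { fix Y assume "Y \<in> XX" "Y \<in> img"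
      then obtain X where "X \<in> XX" "Y = X \<union> S2" unfolding img_def by blast
      then have "S2 \<subseteq> S1" using \<open>Y \<in> XX\<close> unfolding XX_def by blast
      then have False using S12 S2ne by blast }
    then show ?thesis by blast
  qed
  have cardimg: "card (X \<union> S2) = card X + m" if "X \<in> XX" for X
  proof -
    have "finite X" using that finX unfolding XX_def by blast
    moreover have "X \<inter> S2 = {}" using that S12 unfolding XX_def by blast
    ultimately show ?thesis using card_Un_disjoint[of X S2] finS2 c2 by simp
  qed
  have cardX: "card X = m - card (S1 - X)" "card (S1 - X) \<le> m" if "X \<in> XX" for X
  proof -
    have "X \<subseteq> S1" using that unfolding XX_def by blast
    then show "card X = m - card (S1 - X)" "card (S1 - X) \<le> m"
      using card_Diff_subset[of X S1] finS1 c1 finite_subset card_mono by (metis diff_diff_cancel diff_le_self)+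
  qed
  have sumK: "(\<Sum>X\<in>XX \<union> img. fv X) = int (card XX) * (2 * int m - 2) - 4 * int E"
  proof -
    have "(\<Sum>X\<in>XX \<union> img. fv X) = (\<Sum>X\<in>XX. fv X) + (\<Sum>X\<in>img. fv X)"
      using finXX disj unfolding img_def by (simp add: sum.union_disjoint)
    also have "(\<Sum>X\<in>img. fv X) = (\<Sum>X\<in>XX. fv (X \<union> S2))"
      unfolding img_def using sum.reindex[OF inj] by simp
    also have "(\<Sum>X\<in>XX. fv X) + (\<Sum>X\<in>XX. fv (X \<union> S2)) = (\<Sum>X\<in>XX. (2 * int m - 2) - 4 * int (card (S1 - X)))"
      unfolding sum.distrib[symmetric]
    proof (rule sum.cong)
      fix X assume X: "X \<in> XX"
      show "fv X + fv (X \<union> S2) = (2 * int m - 2) - 4 * int (card (S1 - X))"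
        unfolding fv_eq cardimg[OF X] cardX(1)[OF X] using cardX(2)[OF X] by simp
    qed simp
    also have "\<dots> = int (card XX) * (2 * int m - 2) - 4 * int E"
      unfolding E_def by (simp add: sum_subtractf sum_distrib_left of_nat_sum)
    finally show ?thesis .
  qed
  have kpos: "1 \<le> card XX"
  proof -
    have "X0 \<in> XX" unfolding XX_def using X0 by blast
    then show ?thesis using finXX by (metis One_nat_def Suc_leI card_gt_0_iff empty_iff)
  qed
  have "4 * int m - 2 + (\<Sum>X\<in>XX \<union> img. fv X) \<le> (\<Sum>X\<in>F. fv X)"
  proof (rule base4)
    show "finite (XX \<union> img)" using finXX unfolding img_def by simp
    show "XX \<union> img \<subseteq> F" unfolding img_def XX_def using un S2F by blast
    show "{1..n} \<notin> XX \<union> img"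
    proof
      assume "{1..n} \<in> XX \<union> img"
      then show False
      proof
        assume "{1..n} \<in> XX" then show False using BN S1B unfolding XX_def by blast
      next
        assume "{1..n} \<in> img"
        then obtain X where "X \<in> XX" "{1..n} = X \<union> S2" unfolding img_def by blast
        then have "z \<in> B" using zN S1B SB unfolding XX_def by blast
        then show False using Bdef by blast
      qed
    qed
    show "B \<notin> XX \<union> img"
    proof
      assume "B \<in> XX \<union> img"
      then show False
      proof
        assume "B \<in> XX" then show False using S1B unfolding XX_def by blast
      next
        assume "B \<in> img"
        then obtain X where X: "X \<in> XX" "B = X \<union> S2" unfolding img_def by blast
        then have "S1 \<subseteq> X" using SB S12 by blast
        then show False using X unfolding XX_def by blast
      qed
    qed
    show "S1 \<notin> XX \<union> img"
    proof
      assume "S1 \<in> XX \<union> img"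
      then show False
      proof
        assume "S1 \<in> XX" then show False unfolding XX_def by blast
      next
        assume "S1 \<in> img"
        then obtain X where X: "X \<in> XX" "S1 = X \<union> S2" unfolding img_def by blast
        then show False using S12 S2ne by blast
      qed
    qed
    show "S2 \<notin> XX \<union> img"
    proof
      assume "S2 \<in> XX \<union> img"
      then show False
      proof
        assume "S2 \<in> XX" then show False using S12 S2ne unfolding XX_def by blast
      next
        assume "S2 \<in> img"
        then obtain X where X: "X \<in> XX" "S2 = X \<union> S2" unfolding img_def by blast
        then have "X \<subseteq> S1 \<inter> S2" unfolding XX_def by blast
        then show False using S12 XXne[OF X(1)] by blast
      qed
    qed
    fix X assume X: "X \<in> F" "X \<notin> XX \<union> img" "X \<notin> {{1..n}, B, S1, S2}"
    then have "\<not> card X \<le> m" using cls by blast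
    then show "0 \<le> fv X" unfolding fv_eq by simp
  qed
  moreover have "int (card XX) * (2 * int m - 2) \<ge> 1 * (2 * int m - 2)"
    using kpos m2 by (intro mult_right_mono) auto
  moreover have "int E \<le> int m" "2 \<le> int m" using EB m2 by simp_all
  ultimately show ?thesis using sumK
    by (smt (verit))
qed

end

context UC3
begin

lemma Uside_elem:
  assumes X: "X \<in> F" "card X \<le> m" "X \<inter> S1 \<noteq> {}" "X \<inter> S2 \<noteq> {}"
  defines "U \<equiv> X \<inter> S1"
  shows "S2 \<union> U \<in> F" "U \<subseteq> S1" "U \<noteq> {}" "U \<noteq> S1" "card (S1 - U) + 1 \<le> m"
    "card (S2 \<union> U) + card (S1 - U) = 2 * m" "\<not> S1 \<subseteq> S2 \<union> U" "S2 \<subset> S2 \<union> U" "S2 \<union> U \<subset> B"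
    "card X = card U + card (X \<inter> S2)" "card U + card (S1 - U) = m"
proof -
  have XB: "X \<subset> B" using X_sub_B X by blast
  have e: "S2 \<union> U = X \<union> S2" unfolding U_def using XB SB by blast
  show "S2 \<union> U \<in> F" unfolding e using un X(1) S2F by blast
  show US: "U \<subseteq> S1" unfolding U_def by blast
  show Une: "U \<noteq> {}" unfolding U_def using X by blast
  show UnS: "U \<noteq> S1"
  proof
    assume "U = S1"
    then have "S1 \<subseteq> X" unfolding U_def by blast
    then have "m < card X" using meets_both_big'[of X] XB X(4) by blast
    then show False using X(2) by simp
  qed
  have finU: "finite U" using US finS1 finite_subset by blast
  show cU: "card U + card (S1 - U) = m" using card_Diff_subset[OF finU US] card_mono[OF finS1 US] c1 by simp
  have "card U \<noteq> 0" using finU Une by simp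
  then show "card (S1 - U) + 1 \<le> m" using cU by linarith
  have "U \<inter> S2 = {}" using US S12 by blast
  then have "card (S2 \<union> U) = m + card U" using card_Un_disjoint[OF finS2 finU] c2 by (simp add: Int_commute)
  then show "card (S2 \<union> U) + card (S1 - U) = 2 * m" using cU by simp
  show "\<not> S1 \<subseteq> S2 \<union> U" using US UnS S12 by blast
  show "S2 \<subset> S2 \<union> U" using US Une S12 by blast
  show "S2 \<union> U \<subset> B" using US UnS SB S12 by blast
  have "X \<subseteq> B" using XB by blast
  then show "card X = card U + card (X \<inter> S2)" unfolding U_def by (rule cardX_split)
qed

lemma Uside:
  assumes G: "\<And>X. X \<in> G \<Longrightarrow> X \<in> F \<and> card X \<le> m \<and> X \<inter> S1 \<noteq> {} \<and> X \<inter> S2 \<noteq> {}"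
    and finG: "finite G"
  shows "inj_on (\<lambda>U. S2 \<union> U) ((\<lambda>X. X \<inter> S1) ` G)"
    and "(\<Sum>U\<in>(\<lambda>X. X \<inter> S1) ` G. card (S1 - U)) \<le> m"
proof -
  show "inj_on (\<lambda>U. S2 \<union> U) ((\<lambda>X. X \<inter> S1) ` G)"
  proof (rule inj_onI)
    fix U V assume "U \<in> (\<lambda>X. X \<inter> S1) ` G" "V \<in> (\<lambda>X. X \<inter> S1) ` G" and e: "S2 \<union> U = S2 \<union> V"
    then have "U \<subseteq> S1" "V \<subseteq> S1" by auto
    then have "U = (S2 \<union> U) - S2" "V = (S2 \<union> V) - S2" using S12 by auto
    then show "U = V" using e by simp
  qed
  have NF: "{1..n} \<in> F" by (rule top_in)
  have "(\<Sum>U\<in>(\<lambda>X. X \<inter> S1) ` G. card (S1 - U)) \<le> card S1"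
  proof (rule DC[OF finS1])
    show "finite ((\<lambda>X. X \<inter> S1) ` G)" using finG by simp
    show "\<And>A. A \<in> (\<lambda>X. X \<inter> S1) ` G \<Longrightarrow> A \<subseteq> S1" by blast
    fix A C assume A: "A \<in> (\<lambda>X. X \<inter> S1) ` G" and C: "C \<in> (\<lambda>X. X \<inter> S1) ` G" and AC: "A \<noteq> C"
    obtain XA where XA: "XA \<in> G" "A = XA \<inter> S1" using A by blast
    obtain XC where XC: "XC \<in> G" "C = XC \<inter> S1" using C by blast
    have gA: "XA \<in> F" "card XA \<le> m" "XA \<inter> S1 \<noteq> {}" "XA \<inter> S2 \<noteq> {}" using G[OF XA(1)] by auto
    have gC: "XC \<in> F" "card XC \<le> m" "XC \<inter> S1 \<noteq> {}" "XC \<inter> S2 \<noteq> {}" using G[OF XC(1)] by auto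
    note eA = Uside_elem[OF gA, folded XA(2)]
    note eC = Uside_elem[OF gC, folded XC(2)]
    have fa: "S2 \<union> A \<in> F" "S2 \<subset> S2 \<union> A" "S2 \<union> A \<subset> B" "A \<subseteq> S1"
      using eA by auto
    have fc: "S2 \<union> C \<in> F" "S2 \<subset> S2 \<union> C" "S2 \<union> C \<subset> B" "C \<subseteq> S1"
      using eC by auto
    have ne: "S2 \<union> A \<noteq> S2 \<union> C" using AC fa(4) fc(4) S12 by blast
    have "(S2 \<union> A) \<union> (S2 \<union> C) = B"
      using V2[OF S2F fa(1) fc(1) BF NF ne fa(2) fc(2) fa(3) fc(3) BN] .
    then show "A \<union> C = S1" using fa(4) fc(4) SB S12 by blast
  qed
  then show "(\<Sum>U\<in>(\<lambda>X. X \<inter> S1) ` G. card (S1 - U)) \<le> m" using c1 by simp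
qed

end

context UC3
begin

lemma swapped: "UC3 F n z B S2 S1 m"
proof (rule UC3.intro[OF UCF_axioms], unfold_locales)
  show "z \<in> {1..n}" by (rule zN)
  show "B = {1..n} - {z}" by (rule Bdef)
  show "B \<in> F" by (rule BF)
  show "S2 \<in> F" by (rule S2F)
  show "S1 \<in> F" by (rule S1F)
  show "S2 \<inter> S1 = {}" using S12 by blast
  show "S2 \<union> S1 = B" using SB by blast
  show "card S2 = m" by (rule c2)
  show "card S1 = m" by (rule c1)
  show "n = 2 * m + 1" by (rule nm)
  show "\<And>X. X \<in> F \<Longrightarrow> 2 * card X < n \<Longrightarrow> X \<subseteq> B" by (rule smallB)
qed

lemma case3d:
  assumes e: "{} \<notin> F" and n1: "\<not> (\<exists>X\<in>F. X \<subset> S1)" and n2: "\<not> (\<exists>X\<in>F. X \<subset> S2)"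
  shows "0 \<le> (\<Sum>X\<in>F. fv X)"
proof -
  interpret sw: UC3 F n z B S2 S1 m by (rule swapped)
  define Gm where "Gm = {X\<in>F. card X \<le> m \<and> X \<inter> S1 \<noteq> {} \<and> X \<inter> S2 \<noteq> {}}"
  have finGm: "finite Gm" unfolding Gm_def using finF by simp
  have G1: "X \<in> F \<and> card X \<le> m \<and> X \<inter> S1 \<noteq> {} \<and> X \<inter> S2 \<noteq> {}" if "X \<in> Gm" for X
    using that unfolding Gm_def by blast
  have G2: "X \<in> F \<and> card X \<le> m \<and> X \<inter> S2 \<noteq> {} \<and> X \<inter> S1 \<noteq> {}" if "X \<in> Gm" for X
    using that unfolding Gm_def by blast
  have cls: "X = S1 \<or> X = S2 \<or> X \<in> Gm" if XF: "X \<in> F" and Xc: "card X \<le> m" for X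
  proof -
    have XB: "X \<subset> B" using X_sub_B XF Xc by blast
    have Xne: "X \<noteq> {}" using e XF by blast
    show ?thesis
    proof (cases "X \<inter> S2 = {}")
      case True
      then have "X \<subseteq> S1" using XB SB by blast
      then have "X = S1" using n1 XF by blast
      then show ?thesis by blast
    next
      case F2: False
      show ?thesis
      proof (cases "X \<inter> S1 = {}")
        case True
        then have "X \<subseteq> S2" using XB SB by blast
        then have "X = S2" using n2 XF by blast
        then show ?thesis by blast
      next
        case False
        then show ?thesis unfolding Gm_def using XF Xc F2 by blast
      qed
    qed
  qed
  define Uv where "Uv = (\<lambda>X. X \<inter> S1) ` Gm"
  define Vv where "Vv = (\<lambda>X. X \<inter> S2) ` Gm"
  define UI where "UI = (\<lambda>U. S2 \<union> U) ` Uv"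
  define VI where "VI = (\<lambda>V. S1 \<union> V) ` Vv"
  have finUv: "finite Uv" "finite Vv" "finite UI" "finite VI"
    unfolding UI_def VI_def Uv_def Vv_def using finGm by simp_all
  have injU: "inj_on (\<lambda>U. S2 \<union> U) Uv" unfolding Uv_def by (rule Uside(1)[OF G1 finGm])
  have injV: "inj_on (\<lambda>V. S1 \<union> V) Vv" unfolding Vv_def by (rule sw.Uside(1)[OF G2 finGm])
  define E where "E = (\<Sum>U\<in>Uv. card (S1 - U))"
  define Fv where "Fv = (\<Sum>V\<in>Vv. card (S2 - V))"
  have Em: "E \<le> m" unfolding E_def Uv_def by (rule Uside(2)[OF G1 finGm])
  have Fm: "Fv \<le> m" unfolding Fv_def Vv_def by (rule sw.Uside(2)[OF G2 finGm])
  have Uel: "S2 \<union> U \<in> F \<and> card (S2 \<union> U) + card (S1 - U) = 2 * m \<and> \<not> S1 \<subseteq> S2 \<union> U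
      \<and> S2 \<subset> S2 \<union> U \<and> S2 \<union> U \<subset> B \<and> card (S1 - U) + 1 \<le> m" if hU: "U \<in> Uv" for U
  proof -
    obtain X where X: "X \<in> Gm" "U = X \<inter> S1" using hU unfolding Uv_def by blast
    have g: "X \<in> F" "card X \<le> m" "X \<inter> S1 \<noteq> {}" "X \<inter> S2 \<noteq> {}" using G1[OF X(1)] by auto
    note ee = Uside_elem[OF g, folded X(2)]
    show ?thesis using ee by blast
  qed
  have Vel: "S1 \<union> V \<in> F \<and> card (S1 \<union> V) + card (S2 - V) = 2 * m \<and> \<not> S2 \<subseteq> S1 \<union> V
      \<and> S1 \<subset> S1 \<union> V \<and> S1 \<union> V \<subset> B \<and> card (S2 - V) + 1 \<le> m" if hV: "V \<in> Vv" for V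
  proof -
    obtain X where X: "X \<in> Gm" "V = X \<inter> S2" using hV unfolding Vv_def by blast
    have g: "X \<in> F" "card X \<le> m" "X \<inter> S2 \<noteq> {}" "X \<inter> S1 \<noteq> {}" using G2[OF X(1)] by auto
    note ee = sw.Uside_elem[OF g, folded X(2)]
    show ?thesis using ee by blast
  qed
  have Gel: "card X = m - card (S1 - X \<inter> S1) + (m - card (S2 - X \<inter> S2))
     \<and> card (S1 - X \<inter> S1) + 1 \<le> m \<and> card (S2 - X \<inter> S2) + 1 \<le> m" if "X \<in> Gm" for X
  proof -
    have g: "X \<in> F" "card X \<le> m" "X \<inter> S1 \<noteq> {}" "X \<inter> S2 \<noteq> {}" using G1[OF that] by auto
    have g': "X \<in> F" "card X \<le> m" "X \<inter> S2 \<noteq> {}" "X \<inter> S1 \<noteq> {}" using G1[OF that] by auto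
    note e1 = Uside_elem[OF g]
    note e2 = sw.Uside_elem[OF g']
    show ?thesis using e1(5,10,11) e2(5,11) by linarith
  qed
  define p where "p = card Uv"
  define q where "q = card Vv"
  define g where "g = card Gm"
  define Sg where "Sg = (\<Sum>X\<in>Gm. card (S1 - X \<inter> S1) + card (S2 - X \<inter> S2))"
  have sumUI: "(\<Sum>Y\<in>UI. fv Y) = int p * (2 * int m - 1) - 2 * int E"
  proof -
    have "(\<Sum>Y\<in>UI. fv Y) = (\<Sum>U\<in>Uv. fv (S2 \<union> U))"
      unfolding UI_def using sum.reindex[OF injU] by simp
    also have "\<dots> = (\<Sum>U\<in>Uv. (2 * int m - 1) - 2 * int (card (S1 - U)))"
    proof (rule sum.cong)
      fix U assume "U \<in> Uv"
      then have "card (S2 \<union> U) + card (S1 - U) = 2 * m" using Uel by blast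
      then show "fv (S2 \<union> U) = (2 * int m - 1) - 2 * int (card (S1 - U))" unfolding fv_eq by linarith
    qed simp
    also have "\<dots> = int p * (2 * int m - 1) - 2 * int E"
      unfolding E_def p_def by (simp add: sum_subtractf sum_distrib_left of_nat_sum)
    finally show ?thesis .
  qed
  have sumVI: "(\<Sum>Y\<in>VI. fv Y) = int q * (2 * int m - 1) - 2 * int Fv"
  proof -
    have "(\<Sum>Y\<in>VI. fv Y) = (\<Sum>V\<in>Vv. fv (S1 \<union> V))"
      unfolding VI_def using sum.reindex[OF injV] by simp
    also have "\<dots> = (\<Sum>V\<in>Vv. (2 * int m - 1) - 2 * int (card (S2 - V)))"
    proof (rule sum.cong)
      fix V assume "V \<in> Vv"
      then have "card (S1 \<union> V) + card (S2 - V) = 2 * m" using Vel by blast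
      then show "fv (S1 \<union> V) = (2 * int m - 1) - 2 * int (card (S2 - V))" unfolding fv_eq by linarith
    qed simp
    also have "\<dots> = int q * (2 * int m - 1) - 2 * int Fv"
      unfolding Fv_def q_def by (simp add: sum_subtractf sum_distrib_left of_nat_sum)
    finally show ?thesis .
  qed
  have sumG: "(\<Sum>X\<in>Gm. fv X) = int g * (2 * int m - 1) - 2 * int Sg"
  proof -
    have "(\<Sum>X\<in>Gm. fv X) = (\<Sum>X\<in>Gm. (2 * int m - 1) - 2 * int (card (S1 - X \<inter> S1) + card (S2 - X \<inter> S2)))"
    proof (rule sum.cong)
      fix X assume "X \<in> Gm"
      then have "card X = m - card (S1 - X \<inter> S1) + (m - card (S2 - X \<inter> S2))"
        "card (S1 - X \<inter> S1) + 1 \<le> m" "card (S2 - X \<inter> S2) + 1 \<le> m" using Gel by blast+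
      then show "fv X = (2 * int m - 1) - 2 * int (card (S1 - X \<inter> S1) + card (S2 - X \<inter> S2))"
        unfolding fv_eq by simp
    qed simp
    also have "\<dots> = int g * (2 * int m - 1) - 2 * int Sg"
      unfolding Sg_def g_def by (simp only: sum_subtractf sum_distrib_left[symmetric] of_nat_sum) (simp add: algebra_simps)
    finally show ?thesis .
  qed
  have b1: "Sg \<le> g * (2 * m - 2)"
  proof -
    have "Sg \<le> (\<Sum>X\<in>Gm. 2 * m - 2)" unfolding Sg_def
      by (rule sum_mono) (use Gel in fastforce)
    then show ?thesis unfolding g_def by simp
  qed
  define \<pi> where "\<pi> = (\<lambda>X. (X \<inter> S1, X \<inter> S2))"
  have injpi: "inj_on \<pi> Gm"
  proof (rule inj_onI)
    fix X Y assume XY: "X \<in> Gm" "Y \<in> Gm" "\<pi> X = \<pi> Y"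
    have "X \<subseteq> B" "Y \<subseteq> B" using XY(1,2) G1 X_sub_B by blast+
    then have "X = (X \<inter> S1) \<union> (X \<inter> S2)" "Y = (Y \<inter> S1) \<union> (Y \<inter> S2)" using SB by blast+
    then show "X = Y" using XY(3) unfolding \<pi>_def by (metis prod.inject)
  qed
  have piim: "\<pi> ` Gm \<subseteq> Uv \<times> Vv" unfolding \<pi>_def Uv_def Vv_def by blast
  have finUV: "finite (Uv \<times> Vv)" using finUv by simp
  have b2a: "(\<Sum>X\<in>Gm. card (S1 - X \<inter> S1)) \<le> q * E"
  proof -
    have "(\<Sum>X\<in>Gm. card (S1 - X \<inter> S1)) = (\<Sum>X\<in>Gm. (\<lambda>uv. card (S1 - fst uv)) (\<pi> X))"
      unfolding \<pi>_def by simp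
    also have "\<dots> = (\<Sum>uv\<in>\<pi> ` Gm. card (S1 - fst uv))"
      using sum.reindex[OF injpi, of "\<lambda>uv. card (S1 - fst uv)"] by simp
    also have "\<dots> \<le> (\<Sum>uv\<in>Uv \<times> Vv. card (S1 - fst uv))"
      by (rule sum_mono2[OF finUV piim]) simp
    also have "\<dots> = (\<Sum>(U,V)\<in>Uv \<times> Vv. card (S1 - U))"
      by (simp add: case_prod_beta)
    also have "\<dots> = (\<Sum>U\<in>Uv. \<Sum>V\<in>Vv. card (S1 - U))"
      by (rule sum.cartesian_product[symmetric])
    also have "\<dots> = q * E" unfolding q_def E_def by (simp add: sum_distrib_left mult.commute)
    finally show ?thesis .
  qed
  have b2b: "(\<Sum>X\<in>Gm. card (S2 - X \<inter> S2)) \<le> p * Fv"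
  proof -
    have "(\<Sum>X\<in>Gm. card (S2 - X \<inter> S2)) = (\<Sum>X\<in>Gm. (\<lambda>uv. card (S2 - snd uv)) (\<pi> X))"
      unfolding \<pi>_def by simp
    also have "\<dots> = (\<Sum>uv\<in>\<pi> ` Gm. card (S2 - snd uv))"
      using sum.reindex[OF injpi, of "\<lambda>uv. card (S2 - snd uv)"] by simp
    also have "\<dots> \<le> (\<Sum>uv\<in>Uv \<times> Vv. card (S2 - snd uv))"
      by (rule sum_mono2[OF finUV piim]) simp
    also have "\<dots> = (\<Sum>(U,V)\<in>Uv \<times> Vv. card (S2 - V))"
      by (simp add: case_prod_beta)
    also have "\<dots> = (\<Sum>U\<in>Uv. \<Sum>V\<in>Vv. card (S2 - V))"
      by (rule sum.cartesian_product[symmetric])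
    also have "\<dots> = p * Fv" unfolding p_def Fv_def by simp
    finally show ?thesis .
  qed
  have b2: "Sg \<le> q * E + p * Fv" unfolding Sg_def sum.distrib using b2a b2b by linarith
  have pg: "p \<le> g" "q \<le> g" unfolding p_def q_def g_def Uv_def Vv_def using card_image_le finGm by blast+
  have UIc: "m < card Y \<and> \<not> S1 \<subseteq> Y \<and> S2 \<subset> Y \<and> Y \<subset> B \<and> Y \<in> F" if hY: "Y \<in> UI" for Y
  proof -
    obtain U where U: "U \<in> Uv" "Y = S2 \<union> U" using hY unfolding UI_def by blast
    show ?thesis using Uel[OF U(1)] unfolding U(2) by linarith
  qed
  have VIc: "m < card Y \<and> \<not> S2 \<subseteq> Y \<and> S1 \<subset> Y \<and> Y \<subset> B \<and> Y \<in> F" if hY: "Y \<in> VI" for Y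
  proof -
    obtain V where V: "V \<in> Vv" "Y = S1 \<union> V" using hY unfolding VI_def by blast
    show ?thesis using Vel[OF V(1)] unfolding V(2) by linarith
  qed
  have d1: "Gm \<inter> (UI \<union> VI) = {}"
  proof -
    { fix Y assume "Y \<in> Gm" "Y \<in> UI \<union> VI"
      then have False using UIc VIc G1 by fastforce }
    then show ?thesis by blast
  qed
  have d2: "UI \<inter> VI = {}"
  proof -
    { fix Y assume "Y \<in> UI" "Y \<in> VI"
      then have False using UIc VIc by blast }
    then show ?thesis by blast
  qed
  have sumK: "(\<Sum>Y\<in>Gm \<union> (UI \<union> VI). fv Y) = (\<Sum>Y\<in>Gm. fv Y) + (\<Sum>Y\<in>UI. fv Y) + (\<Sum>Y\<in>VI. fv Y)"
    using finGm finUv d1 d2 by (simp add: sum.union_disjoint)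
  have cardN': "m < card {1..n}" using nm by simp
  have cardB': "m < card B" using cardB m2 by simp
  have main: "4 * int m - 2 + (\<Sum>Y\<in>Gm \<union> (UI \<union> VI). fv Y) \<le> (\<Sum>X\<in>F. fv X)"
  proof (rule base4)
    show "finite (Gm \<union> (UI \<union> VI))" using finGm finUv by simp
    show "Gm \<union> (UI \<union> VI) \<subseteq> F" using G1 UIc VIc by blast
    show "{1..n} \<notin> Gm \<union> (UI \<union> VI)"
    proof
      assume a: "{1..n} \<in> Gm \<union> (UI \<union> VI)"
      have "card {1..n} \<le> m \<or> {1..n} \<subset> B" using G1 UIc VIc a by blast
      then show False using cardN' BN by auto
    qed
    show "B \<notin> Gm \<union> (UI \<union> VI)"
    proof
      assume a: "B \<in> Gm \<union> (UI \<union> VI)"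
      have "card B \<le> m \<or> B \<subset> B" using G1 UIc VIc a by blast
      then show False using cardB' by auto
    qed
    show "S1 \<notin> Gm \<union> (UI \<union> VI)"
    proof
      assume a: "S1 \<in> Gm \<union> (UI \<union> VI)"
      have "S1 \<inter> S2 \<noteq> {} \<or> \<not> S1 \<subseteq> S1 \<or> S1 \<subset> S1" using G1 UIc VIc a by blast
      then show False using S12 by blast
    qed
    show "S2 \<notin> Gm \<union> (UI \<union> VI)"
    proof
      assume a: "S2 \<in> Gm \<union> (UI \<union> VI)"
      have "S2 \<inter> S1 \<noteq> {} \<or> \<not> S2 \<subseteq> S2 \<or> S2 \<subset> S2" using G1 UIc VIc a by blast
      then show False using S12 by blast
    qed
    fix X assume X: "X \<in> F" "X \<notin> Gm \<union> (UI \<union> VI)" "X \<notin> {{1..n}, B, S1, S2}"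
    then have "\<not> card X \<le> m" using cls by blast
    then show "0 \<le> fv X" unfolding fv_eq by simp
  qed
  show ?thesis
  proof (cases "Gm = {}")
    case True
    then have "Uv = {}" "Vv = {}" unfolding Uv_def Vv_def by simp_all
    then have "UI = {}" "VI = {}" unfolding UI_def VI_def by simp_all
    then show ?thesis using main True m2 by simp
  next
    case False
    then have "Uv \<noteq> {}" "Vv \<noteq> {}" unfolding Uv_def Vv_def by simp_all
    then have p1: "1 \<le> p" "1 \<le> q" unfolding p_def q_def using finUv by (simp_all add: Suc_le_eq card_gt_0_iff)
    define gm where "gm = int g * int m"
    define pm where "pm = int p * int m"
    define qm where "qm = int q * int m"
    have T: "4 * int m - 2 + (2 * gm - int g) - 2 * int Sg + (2 * pm - int p) - 2 * int E + (2 * qm - int q) - 2 * int Fv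
        \<le> (\<Sum>X\<in>F. fv X)"
      using main sumK sumG sumUI sumVI unfolding gm_def pm_def qm_def by (simp add: algebra_simps)
    have qE: "int (q * E) \<le> qm" unfolding qm_def using Em by (simp add: mult_left_mono)
    have pF: "int (p * Fv) \<le> pm" unfolding pm_def using Fm by (simp add: mult_left_mono)
    have b2': "int Sg \<le> int (q * E) + int (p * Fv)" using b2 by linarith
    have b1': "int Sg \<le> 2 * gm - 2 * int g"
    proof -
      have q1: "int (g * (2 * m - 2)) = int g * (2 * int m - 2)" using m2 by (simp add: of_nat_diff)
      have "int Sg \<le> int (g * (2 * m - 2))" using b1 by (simp only: of_nat_le_iff)
      then have "int Sg \<le> int g * (2 * int m - 2)" unfolding q1 .
      then show ?thesis unfolding gm_def by (simp add: algebra_simps)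
    qed
    have m2': "2 \<le> int m" using m2 by simp
    have pm2: "2 * int p \<le> pm" "2 * int q \<le> qm" unfolding pm_def qm_def
      using mult_left_mono[OF m2', of "int p"] mult_left_mono[OF m2', of "int q"] by (simp_all add: mult.commute)
    have Em': "int E \<le> int m" "int Fv \<le> int m" using Em Fm by simp_all
    show ?thesis
    proof (cases "int p + int q + 2 \<le> 2 * gm - int g")
      case True
      then show ?thesis using T qE pF b2' Em' by linarith
    next
      case False
      then show ?thesis using T b1' pm2 p1 Em' by linarith
    qed
  qed
qed

end

lemma avg_from_sum:
  fixes A :: "nat set set"
  assumes "finite A" "A \<noteq> {}" "0 \<le> (\<Sum>X\<in>A. 2 * int (card X) - int n)"
  shows "Avg A \<ge> real n / 2"
proof -
  have e: "real_of_int (\<Sum>X\<in>A. 2 * int (card X) - int n) = (\<Sum>X\<in>A. 2 * real (card X) - real n)"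
    by (simp add: of_int_sum)
  have "0 \<le> real_of_int (\<Sum>X\<in>A. 2 * int (card X) - int n)"
    using assms(3) by (simp only: of_int_0_le_iff)
  then have "0 \<le> (\<Sum>X\<in>A. 2 * real (card X) - real n)"
    unfolding e .
  then have "real (card A) * real n \<le> 2 * (\<Sum>X\<in>A. real (card X))"
    by (simp add: sum_subtractf sum_distrib_left)
  moreover have "0 < real (card A)" using assms(1,2) by (simp add: card_gt_0_iff)
  ultimately show ?thesis unfolding Avg_def by (simp add: field_simps)
qed

theorem theorem2p1:
  fixes \<A> :: "nat set set" and n :: nat
  assumes "union_closed \<A>"
    and "separating \<A>"
    and "\<Union>\<A> = {1..n}"
    and "height \<A> = 4"
    and "4 \<le> n"
    and "B_size \<A> \<le> 2"
  shows "Avg \<A> \<ge> real n / 2"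
proof -
  interpret UCF \<A> n using assms(1-5) by unfold_locales
  have sumfv: "0 \<le> (\<Sum>X\<in>\<A>. fv X)"
  proof -
    define L where "L = below \<A> (real n / 2)"
    have Lchar: "X \<in> L \<longleftrightarrow> X \<in> \<A> \<and> 2 * card X < n" for X
      unfolding L_def below_def by auto
    have finL: "finite L" using finF Lchar by (metis finite_subset subsetI)
    define P where "P = (\<lambda>T. T \<subseteq> L \<and> \<Union>T = \<Union>L)"
    have "P L" unfolding P_def by simp
    then obtain T0 where T0: "P T0" "\<And>T. P T \<Longrightarrow> card T0 \<le> card T"
      using ex_has_least_nat[of P L card] by blast
    have finT0: "finite T0" using T0(1) finL finite_subset unfolding P_def by blast
    have irrT0: "irredundant T0"
      unfolding irredundant_def
    proof
      fix S assume S: "S \<in> T0"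
      show "irr T0 S \<noteq> {}"
      proof
        assume "irr T0 S = {}"
        then have "S \<subseteq> \<Union>(T0 - {S})" unfolding irr_def by blast
        then have "\<Union>(T0 - {S}) = \<Union>T0" using S by blast
        then have "P (T0 - {S})" using T0(1) unfolding P_def by blast
        then have "card T0 \<le> card (T0 - {S})" using T0(2) by blast
        moreover have "card (T0 - {S}) < card T0" using card_Diff1_less[OF finT0 S] .
        ultimately show False by simp
      qed
    qed
    define Cs where "Cs = {card \<S> | \<S>. \<S> \<subseteq> L \<and> irredundant \<S> \<and> \<Union>\<S> = \<Union>L}"
    have Bs: "B_size \<A> = Min Cs" unfolding B_size_def Cs_def L_def Let_def top by simp
    have CsF: "finite Cs"
    proof -
      have "Cs \<subseteq> card ` Pow L" unfolding Cs_def by blast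
      then show ?thesis using finL finite_subset by blast
    qed
    have "card T0 \<in> Cs" unfolding Cs_def using T0(1) irrT0 unfolding P_def by blast
    then have "Min Cs \<in> Cs" using CsF Min_in by blast
    then obtain SS where SS: "SS \<subseteq> L" "\<Union>SS = \<Union>L" "card SS \<le> 2"
      using Bs assms(6) unfolding Cs_def by auto
    have finSS: "finite SS" using SS(1) finL finite_subset by blast
    define BB where "BB = \<Union>L"
    show ?thesis
    proof (cases "L = {}")
      case True
      have "0 \<le> fv X" if "X \<in> \<A>" for X
        using that Lchar[of X] True unfolding fv_def by auto
      then show ?thesis by (simp add: sum_nonneg)
    next
      case Lne: False
      have BBF: "BB \<in> \<A>" unfolding BB_def using uc_Union[OF uc, of L] Lchar Lne by blast
      have smallBB: "\<And>X. X \<in> \<A> \<Longrightarrow> 2 * card X < n \<Longrightarrow> X \<subseteq> BB"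
        unfolding BB_def using Lchar by blast
      have BBN: "BB \<subseteq> {1..n}" using sub_top BBF by blast
      have cBB: "2 * card BB \<le> card SS * (n - 1)"
      proof -
        have "card BB \<le> (\<Sum>S\<in>SS. card S)" unfolding BB_def SS(2)[symmetric]
          by (rule card_Union_le_sum_card)
        moreover have "(\<Sum>S\<in>SS. 2 * card S) = 2 * (\<Sum>S\<in>SS. card S)" by (simp add: sum_distrib_left)
        ultimately have "2 * card BB \<le> (\<Sum>S\<in>SS. 2 * card S)" by linarith
        also have "\<dots> \<le> (\<Sum>S\<in>SS. n - 1)"
          by (rule sum_mono) (use SS(1) Lchar in fastforce)
        finally show ?thesis by simp
      qed
      have finN: "finite {1..n::nat}" by simp
      have cardNB: "card ({1..n} - BB) = n - card BB"
        using card_Diff_subset[OF _ BBN] finN finite_subset[OF BBN] by simp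
      show ?thesis
      proof (cases "2 \<le> card ({1..n} - BB)")
        case True
        then obtain x y where xy: "x \<in> {1..n} - BB" "y \<in> {1..n} - BB" "x \<noteq> y"
          by (metis One_nat_def card_le_Suc0_iff_eq finite_Diff finN not_less_eq_eq numeral_2_eq_2)
        then have "x \<in> \<Union>\<A>" "y \<in> \<Union>\<A>" using assms(3) by auto
        then obtain E where E: "E \<in> \<A>" "(x \<in> E \<and> y \<notin> E) \<or> (y \<in> E \<and> x \<notin> E)"
          using sep xy(3) unfolding separating_def by metis
        have CF: "BB \<union> E \<in> \<A>" using un BBF E(1) by blast
        have C1: "BB \<subset> BB \<union> E" using E(2) xy by blast
        have C2: "BB \<union> E \<subset> {1..n}" using E xy sub_top[OF E(1)] BBN by blast
        show ?thesis by (rule caseN[OF BBF CF C1 C2 smallBB])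
      next
        case False
        show ?thesis
        proof (cases "card ({1..n} - BB) = 1")
          case True
          then obtain z where z: "{1..n} - BB = {z}" using card_1_singletonE by blast
          have zN: "z \<in> {1..n}" using z by blast
          have BBdef: "BB = {1..n} - {z}" using z BBN by blast
          have cardBB: "card BB = n - 1" using cardNB True by simp
          have "card SS = 2"
          proof (rule ccontr)
            assume "card SS \<noteq> 2"
            then have "card SS \<le> 1" using SS(3) by simp
            then have "2 * card BB \<le> n - 1" using cBB
              by (metis le_trans mult_1 mult_le_mono1)
            then show False using cardBB n4 by simp
          qed
          then obtain S1 S2 where S12: "SS = {S1, S2}" "S1 \<noteq> S2" by (meson card_2_iff)
          have S1L: "S1 \<in> \<A>" "2 * card S1 < n" using SS(1) S12 Lchar by blast+
          have S2L: "S2 \<in> \<A>" "2 * card S2 < n" using SS(1) S12 Lchar by blast+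
          have BBu: "BB = S1 \<union> S2" unfolding BB_def using SS(2) S12 by simp
          have fin1: "finite S1" "finite S2" using finX S1L S2L by blast+
          have cu: "card (S1 \<union> S2) + card (S1 \<inter> S2) = card S1 + card S2"
            using card_Un_Int[OF fin1] by simp
          have cU: "card (S1 \<union> S2) = n - 1" using cardBB BBu by simp
          have ci1: "card (S1 \<inter> S2) = 0" using cu cU S1L(2) S2L(2) n4 by linarith
          have ci2: "card S1 = card S2" using cu cU S1L(2) S2L(2) n4 by linarith
          have ci3: "n = 2 * card S1 + 1" using cu cU S1L(2) S2L(2) n4 by linarith
          note ci = ci1 ci2 ci3
          have S12d: "S1 \<inter> S2 = {}" using ci(1) fin1 by simp
          interpret U3: UC3 \<A> n z BB S1 S2 "card S1"
          proof (rule UC3.intro[OF UCF_axioms], unfold_locales)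
            show "z \<in> {1..n}" by (rule zN)
            show "BB = {1..n} - {z}" by (rule BBdef)
            show "BB \<in> \<A>" by (rule BBF)
            show "S1 \<in> \<A>" by (rule S1L(1))
            show "S2 \<in> \<A>" by (rule S2L(1))
            show "S1 \<inter> S2 = {}" by (rule S12d)
            show "S1 \<union> S2 = BB" using BBu by simp
            show "card S1 = card S1" by simp
            show "card S2 = card S1" using ci by simp
            show "n = 2 * card S1 + 1" by (rule ci(3))
            show "\<And>X. X \<in> \<A> \<Longrightarrow> 2 * card X < n \<Longrightarrow> X \<subseteq> BB" by (rule smallBB)
          qed
          interpret U3s: UC3 \<A> n z BB S2 S1 "card S1" by (rule U3.swapped)
          show ?thesis
          proof (cases "{} \<in> \<A>")
            case True
            then show ?thesis by (rule U3.case3a)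
          next
            case e: False
            show ?thesis
            proof (cases "\<exists>X\<in>\<A>. X \<subset> S1")
              case True
              then obtain X0 where "X0 \<in> \<A>" "X0 \<subset> S1" by blast
              then show ?thesis using U3.case3b[OF e] by blast
            next
              case n1: False
              show ?thesis
              proof (cases "\<exists>X\<in>\<A>. X \<subset> S2")
                case True
                then obtain X0 where "X0 \<in> \<A>" "X0 \<subset> S2" by blast
                then show ?thesis using U3s.case3b[OF e] by blast
              next
                case n2: False
                show ?thesis by (rule U3.case3d[OF e n1 n2])
              qed
            qed
          qed
        next
          case F2: False
          have "card ({1..n} - BB) = 0" using F2 False by linarith
          then have "card BB = n" using cardNB BBN card_mono[OF finN BBN] by simp
          moreover have "card SS * (n - 1) \<le> 2 * (n - 1)" by (rule mult_le_mono1[OF SS(3)])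
          ultimately show ?thesis using cBB n4 by linarith
        qed
      qed
    qed
  qed
  show ?thesis
  proof (rule avg_from_sum)
    show "finite \<A>" by (rule finF)
    show "\<A> \<noteq> {}" using assms(1) unfolding union_closed_def by blast
    show "0 \<le> (\<Sum>X\<in>\<A>. 2 * int (card X) - int n)" using sumfv unfolding fv_def .
  qed
qed

end
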